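(* Let $\boldsymbol{\mathcal{G}}=(\mathcal{V},\boldsymbol{\mathcal{E}},\mu(\cdot))$ be a stochastic digraph with vertex set $\mathbb{Z}_n$, edge sets $\mathcal{E}_1,\dots,\mathcal{E}_h$, and out-neighborhood map $H(x,w)=\{y:(x,y)\in\mathcal{E}_w\}$, such that there is no pair $(i,w)\in\mathbb{Z}_n\times\mathbb{Z}_h$ with $\mu(\{w\})>0$ and $H(i,w)=\emptyset$. Let $\mathcal{Q}\subset\mathbb{Z}_n$ and let $\check{\boldsymbol{\mathcal{G}}}$ be the augmented stochastic digraph on $\mathbb{Z}_{n+2}$ (with the same $\mu$) obtained by replacing, in each $\mathcal{E}_s$, every edge $(i,j)$ with $j\in\mathcal{Q}$ by the edge $(i,n+1)$, and adding the edges $(n+1,n+2)$ and $(n+2,n+2)$ to each $\mathcal{E}_s$. Let $\check H$ be its out-neighborhood map and consider the Markov decision process on states $\mathbb{Z}_{n+2}$ with action space $\mathcal{A}(i)$ at state $i$ equal to the set of tuples $a=(\xi_{1,a},\dots,\xi_{h,a})$ with $\xi_{w,a}\in\check H(i,w)$ for each $w$, transition probabilities $$\check p(j\mid i,a)=\sum_{w\in\{s\in\mathbb{Z}_h:\,\xi_{s,a}=j\}}\mu(\{w\}),$$ and reward $r(i,a,j)=-\mathbb{I}_{\{n+1\}}(j)$. Let $v_\star$ be the optimal state-value function of this MDP, i.e., $v_\star(0,x)=0$ and $v_\star(k,x)=\max_{a\in\mathcal{A}(x)}\sum_{j}\check p(j\mid x,a)\big(r(x,a,j)+v_\star(k-1,j)\big)$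 for $k\geqslant1$. Then for all $k\in\mathbb{Z}_{\geqslant0}$ and all $x\in\mathbb{Z}_n$, $$\mathfrak{V}_{\mathcal{Q}}(k,x)=-v_\star(k,x),$$ where $\mathfrak{V}_{\mathcal{Q}}(k,x):=\inf_{\boldsymbol{x}\in\mathcal{S}(x)}\mathbb{P}\big(\exists\,t\in\{1,\dots,k\}:\boldsymbol{x}_t\in\mathcal{Q}\big)$ is the strong recurrence probability.
   Context: A stochastic digraph is a triple $(\mathbb{Z}_n,\{\mathcal{E}_s\}_{s=1}^h,\mu)$ with $\mathcal{E}_s\subset\mathbb{Z}_n\times\mathbb{Z}_n$ and $\mu$ the common distribution of an i.i.d. sequence $\boldsymbol{w}_k:\Omega\to\mathbb{Z}_h$, $k\in\mathbb{Z}_{\geqslant0}$, on a probability space $(\Omega,\mathcal{F},\mathbb{P})$. A stochastic directed path from $x$ is a map $\omega\mapsto\{\boldsymbol{x}_k(\omega)\}_{k=0}^{\boldsymbol{K}(\omega)}$ with $\boldsymbol{x}_0=x$, $\boldsymbol{x}_{k+1}(\omega)\in H(\boldsymbol{x}_k(\omega),\boldsymbol{w}_k(\omega))$ for all $\omega$ and $k<\boldsymbol{K}(\omega)$, and with $\boldsymbol{x}_{k+1}$ measurable with respect to $\sigma(\boldsymbol{w}_0,\dots,\boldsymbol{w}_k)$ for each $k$. It is maximal if it cannot be extended; $\mathcal{S}(x)$ is the set of maximal stochastic directed paths from $x$. $\mathbb{I}_{A}$ denotes the indicator function of the set $A$. *)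

theory Defs
  imports "HOL-Probability.Probability"
begin

text \<open>Vertices of the stochastic digraph are \<open>{1..n}\<close>, labels are \<open>{1..h}\<close>.
  \<open>E s\<close> is the edge set \<open>\<E>_s\<close>; \<open>\<mu>\<close> is a pmf on \<open>{1..h}\<close>.\<close>

definition outnb :: "(nat \<Rightarrow> (nat \<times> nat) set) \<Rightarrow> nat \<Rightarrow> nat \<Rightarrow> nat set" where
  "outnb E x s = {y. (x, y) \<in> E s}"

definition past_sigma :: "'a measure \<Rightarrow> (nat \<Rightarrow> 'a \<Rightarrow> nat) \<Rightarrow> nat \<Rightarrow> 'a measure" where
  "past_sigma M w k = sigma (space M) {w i -` A \<inter> space M | i A. i \<le> k}"

text \<open>A stochastic directed path from \<open>x\<close> is encoded by \<open>y :: nat \<Rightarrow> 'a \<Rightarrow> nat option\<close>: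
  \<open>y k \<omega> = Some (x_k \<omega>)\<close> if \<open>k \<le> K \<omega>\<close> and \<open>None\<close> otherwise.\<close>
definition stoch_path ::
  "'a measure \<Rightarrow> (nat \<Rightarrow> 'a \<Rightarrow> nat) \<Rightarrow> (nat \<Rightarrow> (nat \<times> nat) set) \<Rightarrow> nat \<Rightarrow> (nat \<Rightarrow> 'a \<Rightarrow> nat option) \<Rightarrow> bool" where
  "stoch_path M w E x y \<longleftrightarrow>
     (\<forall>\<omega>\<in>space M. y 0 \<omega> = Some x) \<and>
     (\<forall>\<omega>\<in>space M. \<forall>k. y (Suc k) \<omega> \<noteq> None \<longrightarrow> y k \<omega> \<noteq> None) \<and>
     (\<forall>\<omega>\<in>space M. \<forall>k i j. y k \<omega> = Some i \<longrightarrow> y (Suc k) \<omega> = Some j \<longrightarrow> j \<in> outnb E i (w k \<omega>)) \<and>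
     (\<forall>k. y (Suc k) \<in> measurable (past_sigma M w k) (count_space UNIV))"

definition max_stoch_paths ::
  "'a measure \<Rightarrow> (nat \<Rightarrow> 'a \<Rightarrow> nat) \<Rightarrow> (nat \<Rightarrow> (nat \<times> nat) set) \<Rightarrow> nat \<Rightarrow> (nat \<Rightarrow> 'a \<Rightarrow> nat option) set" where
  "max_stoch_paths M w E x = {y. stoch_path M w E x y \<and>
     (\<forall>\<omega>\<in>space M. \<forall>k i. y k \<omega> = Some i \<longrightarrow> y (Suc k) \<omega> = None \<longrightarrow> outnb E i (w k \<omega>) = {})}"

definition strong_rec_prob ::
  "'a measure \<Rightarrow> (nat \<Rightarrow> 'a \<Rightarrow> nat) \<Rightarrow> (nat \<Rightarrow> (nat \<times> nat) set) \<Rightarrow> nat set \<Rightarrow> nat \<Rightarrow> nat \<Rightarrow> real" where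
  "strong_rec_prob M w E Q k x =
     (INF y\<in>max_stoch_paths M w E x. measure M {\<omega>\<in>space M. \<exists>t\<in>{1..k}. \<exists>q\<in>Q. y t \<omega> = Some q})"

definition aug_edges :: "nat \<Rightarrow> (nat \<Rightarrow> (nat \<times> nat) set) \<Rightarrow> nat set \<Rightarrow> nat \<Rightarrow> (nat \<times> nat) set" where
  "aug_edges n E Q s = {(i, if j \<in> Q then n + 1 else j) | i j. (i, j) \<in> E s}
                        \<union> {(n + 1, n + 2), (n + 2, n + 2)}"

text \<open>Actions at state \<open>i\<close>: tuples \<open>\<xi>\<close> indexed by the labels of positive probability
  (coordinates of null labels do not influence the transition probabilities).\<close>
definition actions :: "nat \<Rightarrow> nat \<Rightarrow> (nat \<Rightarrow> (nat \<times> nat) set) \<Rightarrow> nat pmf \<Rightarrow> nat set \<Rightarrow> nat \<Rightarrow> (nat \<Rightarrow> nat) set" where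
  "actions n h E \<mu> Q i = (\<Pi>\<^sub>E s\<in>{s\<in>{1..h}. pmf \<mu> s > 0}. outnb (aug_edges n E Q) i s)"

definition trans_prob :: "nat \<Rightarrow> nat pmf \<Rightarrow> nat \<Rightarrow> (nat \<Rightarrow> nat) \<Rightarrow> real" where
  "trans_prob h \<mu> j a = (\<Sum>s\<in>{s\<in>{1..h}. pmf \<mu> s > 0 \<and> a s = j}. pmf \<mu> s)"

definition reward :: "nat \<Rightarrow> nat \<Rightarrow> real" where
  "reward n j = (if j = n + 1 then -1 else 0)"

fun vstar :: "nat \<Rightarrow> nat \<Rightarrow> (nat \<Rightarrow> (nat \<times> nat) set) \<Rightarrow> nat pmf \<Rightarrow> nat set \<Rightarrow> nat \<Rightarrow> nat \<Rightarrow> real" where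
  "vstar n h E \<mu> Q 0 x = 0"
| "vstar n h E \<mu> Q (Suc k) x =
     Max ((\<lambda>a. \<Sum>j\<in>{1..n+2}. trans_prob h \<mu> j a * (reward n j + vstar n h E \<mu> Q k j))
          ` actions n h E \<mu> Q x)"

end

theory Submission
  imports Defs
begin

locale rsetup = prob_space M for M :: "'a measure" +
  fixes n h :: nat and E :: "nat \<Rightarrow> (nat \<times> nat) set" and \<mu> :: "nat pmf"
    and Q :: "nat set" and w :: "nat \<Rightarrow> 'a \<Rightarrow> nat"
  assumes E_sub: "\<forall>s\<in>{1..h}. E s \<subseteq> {1..n} \<times> {1..n}"
    and pmf_sub: "set_pmf \<mu> \<subseteq> {1..h}"
    and nodead: "\<not> (\<exists>i\<in>{1..n}. \<exists>s\<in>{1..h}. pmf \<mu> s > 0 \<and> outnb E i s = {})"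
    and Q_sub: "Q \<subseteq> {1..n}"
    and w_range: "\<forall>k. \<forall>\<omega>\<in>space M. w k \<omega> \<in> {1..h}"
    and indep: "prob_space.indep_vars M (\<lambda>_. count_space UNIV) w UNIV"
    and distr_w: "\<forall>k. distr M (count_space UNIV) (w k) = measure_pmf \<mu>"
begin

abbreviation "S \<equiv> {s\<in>{1..h}. pmf \<mu> s > 0}"
abbreviation "vs \<equiv> vstar n h E \<mu> Q"
definition "cc k j = (if j \<in> Q then 1 else - vs k j)"
definition "phi j = (if j \<in> Q then n + 1 else j)"

lemma finS: "finite S" by simp

lemma sumS: "(\<Sum>s\<in>S. pmf \<mu> s) = 1"
  by (rule sum_pmf_eq_1) (use pmf_sub in \<open>auto simp: set_pmf_iff order.strict_iff_order\<close>)

lemma outnb_sub: "s \<in> {1..h} \<Longrightarrow> outnb E i s \<subseteq> {1..n}"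
  using E_sub by (auto simp: outnb_def)

lemma outnb_ne: "i \<in> {1..n} \<Longrightarrow> s \<in> S \<Longrightarrow> outnb E i s \<noteq> {}"
  using nodead by auto

lemma trans_sum:
  assumes "finite J" "\<forall>s\<in>S. a s \<in> J"
  shows "(\<Sum>j\<in>J. trans_prob h \<mu> j a * g j) = (\<Sum>s\<in>S. pmf \<mu> s * g (a s))"
proof -
  have "(\<Sum>j\<in>J. trans_prob h \<mu> j a * g j) = (\<Sum>j\<in>J. \<Sum>s\<in>{s. s \<in> S \<and> a s = j}. pmf \<mu> s * g (a s))"
    unfolding trans_prob_def sum_distrib_right
    by (intro sum.cong refl) (auto intro!: sum.cong)
  also have "\<dots> = (\<Sum>s\<in>S. pmf \<mu> s * g (a s))"
    by (rule sum.group) (use assms in auto)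
  finally show ?thesis .
qed

lemma outnb_aug: "x \<in> {1..n} \<Longrightarrow> outnb (aug_edges n E Q) x s = phi ` outnb E x s"
  by (auto simp: outnb_def aug_edges_def phi_def)

lemma outnb_aug2: "s \<in> {1..h} \<Longrightarrow> outnb (aug_edges n E Q) (n+2) s = {n+2}"
  using E_sub by (fastforce simp: outnb_def aug_edges_def)

lemma outnb_aug1: "s \<in> {1..h} \<Longrightarrow> outnb (aug_edges n E Q) (n+1) s = {n+2}"
  using E_sub by (fastforce simp: outnb_def aug_edges_def)

lemma reward2: "reward n (n+2) = 0" by (simp add: reward_def)

lemma const_act:
  assumes "\<And>s. s \<in> {1..h} \<Longrightarrow> outnb (aug_edges n E Q) z s = {n+2}"
  shows "vs (Suc k) z = vs k (n+2)"
proof -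
  let ?F = "\<lambda>a. \<Sum>j\<in>{1..n+2}. trans_prob h \<mu> j a * (reward n j + vs k j)"
  have A: "a s = n + 2" if "a \<in> actions n h E \<mu> Q z" "s \<in> S" for a s
    using that assms by (auto simp: actions_def)
  have F: "?F a = vs k (n+2)" if "a \<in> actions n h E \<mu> Q z" for a
  proof -
    have "?F a = (\<Sum>s\<in>S. pmf \<mu> s * (reward n (a s) + vs k (a s)))"
      by (rule trans_sum) (use A[OF that] in auto)
    also have "\<dots> = (\<Sum>s\<in>S. pmf \<mu> s * vs k (n+2))"
      using A[OF that] by (intro sum.cong) (auto simp: reward_def)
    also have "\<dots> = (\<Sum>s\<in>S. pmf \<mu> s) * vs k (n+2)" by (rule sum_distrib_right[symmetric])
    also have "\<dots> = vs k (n+2)" by (simp only: sumS mult_1)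
    finally show ?thesis .
  qed
  have ne: "(\<lambda>s\<in>S. n+2) \<in> actions n h E \<mu> Q z"
    using assms by (auto simp: actions_def)
  have "?F ` actions n h E \<mu> Q z = {vs k (n+2)}"
  proof -
    have "?F ` actions n h E \<mu> Q z = (\<lambda>_. vs k (n+2)) ` actions n h E \<mu> Q z"
      by (rule image_cong[OF refl F])
    then show ?thesis using ne by (auto simp only: image_constant_conv split: if_splits)
  qed
  then show ?thesis by (simp only: vstar.simps Max_singleton)
qed

lemma vs2: "vs k (n+2) = 0"
proof (induction k)
  case 0 show ?case by simp
next
  case (Suc k)
  have "vs (Suc k) (n+2) = vs k (n+2)" by (rule const_act) (rule outnb_aug2)
  with Suc show ?case by simp
qed

lemma vs1: "vs k (n+1) = 0"
proof (cases k)
  case 0 then show ?thesis by simp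
next
  case (Suc k')
  have "vs (Suc k') (n+1) = vs k' (n+2)" by (rule const_act) (rule outnb_aug1)
  with Suc show ?thesis by (simp only: vs2)
qed

lemma finPi: "x \<in> {1..n} \<Longrightarrow> finite (PiE S (outnb E x))"
  by (rule finite_PiE) (auto intro: finite_subset[OF outnb_sub])

lemma nePi: "x \<in> {1..n} \<Longrightarrow> PiE S (outnb E x) \<noteq> {}"
  using outnb_ne by (auto simp: PiE_eq_empty_iff)

lemma vs_Suc:
  assumes x: "x \<in> {1..n}"
  shows "vs (Suc k) x = Max ((\<lambda>b. - (\<Sum>s\<in>S. pmf \<mu> s * cc k (b s))) ` PiE S (outnb E x))"
proof -
  let ?F = "\<lambda>a. \<Sum>j\<in>{1..n+2}. trans_prob h \<mu> j a * (reward n j + vs k j)"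
  let ?G = "\<lambda>b. - (\<Sum>s\<in>S. pmf \<mu> s * cc k (b s))"
  let ?psi = "\<lambda>b. restrict (phi \<circ> b) S"
  have act: "actions n h E \<mu> Q x = ?psi ` PiE S (outnb E x)"
  proof
    show "?psi ` PiE S (outnb E x) \<subseteq> actions n h E \<mu> Q x"
      using x by (auto simp: actions_def outnb_aug)
  next
    show "actions n h E \<mu> Q x \<subseteq> ?psi ` PiE S (outnb E x)"
    proof
      fix a assume a: "a \<in> actions n h E \<mu> Q x"
      have ex: "\<exists>j. j \<in> outnb E x s \<and> phi j = a s" if "s \<in> S" for s
      proof -
        have "a s \<in> outnb (aug_edges n E Q) x s"
          using PiE_mem[OF a[unfolded actions_def] that] .
        then show ?thesis using outnb_aug[OF x] by auto
      qed
      define b where "b = restrict (\<lambda>s. SOME j. j \<in> outnb E x s \<and> phi j = a s) S"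
      have b1: "b s \<in> outnb E x s \<and> phi (b s) = a s" if "s \<in> S" for s
        using someI_ex[OF ex[OF that]] that by (simp add: b_def)
      have "b \<in> PiE S (outnb E x)" using b1 by (auto simp: b_def)
      moreover have "?psi b = a"
        using a b1 by (intro ext) (auto simp: actions_def PiE_def extensional_def)
      ultimately show "a \<in> ?psi ` PiE S (outnb E x)" by blast
    qed
  qed
  have FG: "?F (?psi b) = ?G b" if b: "b \<in> PiE S (outnb E x)" for b
  proof -
    have bs: "b s \<in> {1..n}" if "s \<in> S" for s
      using outnb_sub[of s x] PiE_mem[OF b that] that by auto
    have "?F (?psi b) = (\<Sum>s\<in>S. pmf \<mu> s * (reward n (?psi b s) + vs k (?psi b s)))"
    proof (rule trans_sum)
      show "\<forall>s\<in>S. (restrict (phi \<circ> b) S) s \<in> {1..n+2}"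
      proof
        fix s assume "s \<in> S"
        then show "(restrict (phi \<circ> b) S) s \<in> {1..n+2}" using bs[of s] by (auto simp: phi_def)
      qed
    qed simp
    also have "\<dots> = (\<Sum>s\<in>S. pmf \<mu> s * (reward n (phi (b s)) + vs k (phi (b s))))"
      by (intro sum.cong refl) simp
    also have "\<dots> = (\<Sum>s\<in>S. pmf \<mu> s * (- cc k (b s)))"
    proof (intro sum.cong refl)
      fix s assume "s \<in> S"
      then have bs': "b s \<in> {1..n}" by (rule bs)
      have v1: "vs k (Suc n) = 0" using vs1 by simp
      show "pmf \<mu> s * (reward n (phi (b s)) + vs k (phi (b s))) = pmf \<mu> s * (- cc k (b s))"
        using bs' by (cases "b s \<in> Q") (auto simp: phi_def cc_def reward_def v1)
    qed
    also have "\<dots> = ?G b" by (simp add: sum_negf)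
    finally show ?thesis .
  qed
  have "?F ` actions n h E \<mu> Q x = ?G ` PiE S (outnb E x)"
    unfolding act image_image by (rule image_cong[OF refl FG])
  then show ?thesis by (simp only: vstar.simps)
qed

lemma V1:
  assumes "x \<in> {1..n}" "b \<in> PiE S (outnb E x)"
  shows "- vs (Suc k) x \<le> (\<Sum>s\<in>S. pmf \<mu> s * cc k (b s))"
proof -
  have "- (\<Sum>s\<in>S. pmf \<mu> s * cc k (b s)) \<le> vs (Suc k) x"
    unfolding vs_Suc[OF assms(1)] by (intro Max_ge finite_imageI finPi[OF assms(1)] imageI assms(2))
  then show ?thesis by linarith
qed

lemma V2:
  assumes "x \<in> {1..n}"
  shows "\<exists>b\<in>PiE S (outnb E x). (\<Sum>s\<in>S. pmf \<mu> s * cc k (b s)) = - vs (Suc k) x"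
proof -
  have "vs (Suc k) x \<in> (\<lambda>b. - (\<Sum>s\<in>S. pmf \<mu> s * cc k (b s))) ` PiE S (outnb E x)"
    unfolding vs_Suc[OF assms(1)] by (intro Max_in finite_imageI finPi[OF assms(1)]) (simp only: image_is_empty nePi[OF assms(1)] not_False_eq_True)
  then obtain b where b: "b \<in> PiE S (outnb E x)" and e: "vs (Suc k) x = - (\<Sum>s\<in>S. pmf \<mu> s * cc k (b s))"
    by (rule imageE)
  show ?thesis using b e by (intro bexI[of _ b]) linarith+
qed

end

definition pre :: "(nat \<Rightarrow> 'a \<Rightarrow> nat) \<Rightarrow> nat \<Rightarrow> 'a \<Rightarrow> nat list" where
  "pre w t \<omega> = map (\<lambda>i. w i \<omega>) [0..<t]"

lemma pre_Suc: "pre w (Suc t) \<omega> = pre w t \<omega> @ [w t \<omega>]"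
  by (simp add: pre_def)

lemma length_pre[simp]: "length (pre w t \<omega>) = t"
  by (simp add: pre_def)

lemma take_pre: "t \<le> k \<Longrightarrow> take t (pre w k \<omega>) = pre w t \<omega>"
  by (simp add: pre_def take_map)

definition Lk :: "nat \<Rightarrow> nat set \<Rightarrow> nat list set" where
  "Lk k A = {xs. set xs \<subseteq> A \<and> length xs = k}"

context rsetup
begin

lemma w_meas: "w i \<in> measurable M (count_space UNIV)"
  using indep by (auto simp: indep_vars_def)

lemma space_past: "space (past_sigma M w t) = space M"
  by (simp add: past_sigma_def space_measure_of_conv)

lemma sets_past: "sets (past_sigma M w t) = sigma_sets (space M) {w i -` A \<inter> space M | i A. i \<le> t}"
  unfolding past_sigma_def by (rule sets_measure_of) auto

lemma atom_const:
  assumes y: "y \<in> measurable (past_sigma M w t) (count_space UNIV)"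
    and om: "\<omega> \<in> space M" "\<omega>' \<in> space M" and eq: "pre w (Suc t) \<omega> = pre w (Suc t) \<omega>'"
  shows "y \<omega> = y \<omega>'"
proof -
  have wi: "w i \<omega> = w i \<omega>'" if "i \<le> t" for i
  proof -
    have "pre w (Suc t) \<omega> ! i = pre w (Suc t) \<omega>' ! i" using eq by simp
    then show ?thesis using that by (simp add: pre_def nth_append del: upt_Suc)
  qed
  have inv: "\<omega> \<in> A \<longleftrightarrow> \<omega>' \<in> A" if "A \<in> sigma_sets (space M) {w i -` A \<inter> space M | i A. i \<le> t}" for A
    using that
  proof induction
    case (Basic a) then show ?case using wi om by auto
  next
    case Empty then show ?case by simp
  next
    case (Compl a) then show ?case using om by auto
  next
    case (Union a) then show ?case by auto
  qed
  have "y -` {y \<omega>} \<inter> space (past_sigma M w t) \<in> sets (past_sigma M w t)"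
    by (rule measurable_sets[OF y]) simp
  then have "y -` {y \<omega>} \<inter> space M \<in> sigma_sets (space M) {w i -` A \<inter> space M | i A. i \<le> t}"
    by (simp add: space_past sets_past)
  from inv[OF this] om show ?thesis by auto
qed

lemma pre_meas: "pre w k \<in> measurable M (count_space UNIV)"
proof (induction k)
  case 0 then show ?case by (simp add: pre_def)
next
  case (Suc k)
  have "(\<lambda>\<omega>. (\<lambda>l \<omega>. l @ [w k \<omega>]) (pre w k \<omega>) \<omega>) \<in> measurable M (count_space UNIV)"
  proof (rule measurable_compose_countable'[OF _ Suc.IH])
    fix l :: "nat list"
    show "(\<lambda>\<omega>. l @ [w k \<omega>]) \<in> measurable M (count_space UNIV)"
      by (rule measurable_compose[OF w_meas]) simp
  qed simp
  then show ?case by (simp add: pre_Suc)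
qed

lemma atom_sets: "{\<omega>\<in>space M. pre w k \<omega> = ls} \<in> sets M"
proof -
  have "pre w k -` {ls} \<inter> space M \<in> sets M"
    by (rule measurable_sets[OF pre_meas]) simp
  moreover have "pre w k -` {ls} \<inter> space M = {\<omega>\<in>space M. pre w k \<omega> = ls}" by auto
  ultimately show ?thesis by simp
qed

lemma prob_w: "prob (w i -` {v} \<inter> space M) = pmf \<mu> v"
proof -
  have "measure (distr M (count_space UNIV) (w i)) {v} = prob (w i -` {v} \<inter> space M)"
    by (rule measure_distr[OF w_meas]) simp
  then show ?thesis using distr_w by (simp add: measure_pmf_single)
qed

lemma atom_prob:
  assumes "length ls = k"
  shows "prob {\<omega>\<in>space M. pre w k \<omega> = ls} = prod_list (map (pmf \<mu>) ls)"
proof (cases "k = 0")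
  case True then show ?thesis using assms by (simp add: pre_def prob_space)
next
  case False
  have eq: "{\<omega>\<in>space M. pre w k \<omega> = ls} = (\<Inter>i\<in>{0..<k}. w i -` {ls ! i} \<inter> space M)"
  proof -
    have pe: "pre w k \<omega> = ls \<longleftrightarrow> (\<forall>i\<in>{0..<k}. w i \<omega> = ls ! i)" for \<omega>
      using assms unfolding pre_def list_eq_iff_nth_eq by auto
    have "0 \<in> {0..<k}" using False by simp
    then show ?thesis unfolding pe by blast
  qed
  have "prob (\<Inter>i\<in>{0..<k}. w i -` {ls ! i} \<inter> space M) = (\<Prod>i\<in>{0..<k}. prob (w i -` {ls ! i} \<inter> space M))"
    by (rule indep_varsD[OF indep]) (use False in auto)
  also have "\<dots> = (\<Prod>i\<in>{0..<k}. pmf \<mu> (ls ! i))" by (simp add: prob_w)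
  also have "\<dots> = prod_list (map (pmf \<mu>) ls)"
    using assms by (simp add: prod.list_conv_set_nth)
  finally show ?thesis using eq by simp
qed

lemma prod_list_pos: "set ls \<subseteq> S \<Longrightarrow> prod_list (map (pmf \<mu>) ls) > 0"
  by (induction ls) auto

lemma atom_ne:
  assumes "set ls \<subseteq> S"
  shows "\<exists>\<omega>\<in>space M. pre w (length ls) \<omega> = ls"
proof (rule ccontr)
  assume "\<not> ?thesis"
  then have "{\<omega>\<in>space M. pre w (length ls) \<omega> = ls} = {}" by auto
  then have "prob {\<omega>\<in>space M. pre w (length ls) \<omega> = ls} = 0" by (simp only: measure_empty)
  with atom_prob[of ls "length ls"] prod_list_pos[OF assms] show False by simp
qed

lemma atom_sets2: "{\<omega>\<in>space M. pre w k \<omega> = ls \<and> P} \<in> sets M"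
proof (cases P)
  case True then show ?thesis using atom_sets[of k ls] by simp
qed simp

lemma finLk: "finite A \<Longrightarrow> finite (Lk k A)"
  unfolding Lk_def by (rule finite_lists_length_eq)

lemma event_prob:
  "prob {\<omega>\<in>space M. R (pre w k \<omega>)} =
     (\<Sum>ls\<in>Lk k S. prod_list (map (pmf \<mu>) ls) * (if R ls then 1 else 0))"
proof -
  let ?A = "\<lambda>ls. {\<omega>\<in>space M. pre w k \<omega> = ls \<and> R ls}"
  have pre_in: "pre w k \<omega> \<in> Lk k {1..h}" if "\<omega> \<in> space M" for \<omega>
    using w_range that by (auto simp: Lk_def pre_def)
  have "{\<omega>\<in>space M. R (pre w k \<omega>)} = (\<Union>ls\<in>Lk k {1..h}. ?A ls)"
    using pre_in by auto
  then have "prob {\<omega>\<in>space M. R (pre w k \<omega>)} = (\<Sum>ls\<in>Lk k {1..h}. prob (?A ls))"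
  proof (simp only:)
    show "prob (\<Union>ls\<in>Lk k {1..h}. ?A ls) = (\<Sum>ls\<in>Lk k {1..h}. prob (?A ls))"
    proof (rule finite_measure_finite_Union)
      show "finite (Lk k {1..h})" by (rule finLk) simp
      show "?A ` Lk k {1..h} \<subseteq> events" by (intro image_subsetI atom_sets2)
      show "disjoint_family_on ?A (Lk k {1..h})" unfolding disjoint_family_on_def by blast
    qed
  qed
  also have "\<dots> = (\<Sum>ls\<in>Lk k {1..h}. prod_list (map (pmf \<mu>) ls) * (if R ls then 1 else 0))"
  proof (intro sum.cong refl)
    fix ls assume "ls \<in> Lk k {1..h}"
    then have "length ls = k" by (simp add: Lk_def)
    show "prob (?A ls) = prod_list (map (pmf \<mu>) ls) * (if R ls then 1 else 0)"
    proof (cases "R ls")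
      case True
      then have "?A ls = {\<omega>\<in>space M. pre w k \<omega> = ls}" by simp
      then show ?thesis using True atom_prob[OF \<open>length ls = k\<close>] by simp
    next
      case False
      then have "?A ls = {}" by simp
      then show ?thesis using False by simp
    qed
  qed
  also have "\<dots> = (\<Sum>ls\<in>Lk k S. prod_list (map (pmf \<mu>) ls) * (if R ls then 1 else 0))"
  proof (rule sum.mono_neutral_right)
    show "finite (Lk k {1..h})" by (simp add: finLk)
    show "Lk k S \<subseteq> Lk k {1..h}" by (auto simp: Lk_def)
    show "\<forall>ls\<in>Lk k {1..h} - Lk k S. prod_list (map (pmf \<mu>) ls) * (if R ls then 1 else 0) = 0"
    proof
      fix ls assume "ls \<in> Lk k {1..h} - Lk k S"
      then have "set ls \<subseteq> {1..h}" "\<not> set ls \<subseteq> S" unfolding Lk_def by blast+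
      then obtain s where "s \<in> set ls" "\<not> pmf \<mu> s > 0" by blast
      then have "0 \<in> set (map (pmf \<mu>) ls)" using pmf_nonneg[of \<mu> s]
        by (metis image_eqI list.set_map order_less_le)
      then show "prod_list (map (pmf \<mu>) ls) * (if R ls then 1 else 0) = 0"
        by (simp add: prod_list_zero_iff)
    qed
  qed
  finally show ?thesis .
qed

end

context rsetup
begin

definition hitR :: "nat \<Rightarrow> (nat list \<Rightarrow> nat option) \<Rightarrow> nat list \<Rightarrow> bool" where
  "hitR k Y ls = (\<exists>t\<in>{1..k}. \<exists>q\<in>Q. Y (take t ls) = Some q)"

definition hs :: "nat \<Rightarrow> (nat list \<Rightarrow> nat option) \<Rightarrow> real" where
  "hs k Y = (\<Sum>ls\<in>Lk k S. prod_list (map (pmf \<mu>) ls) * (if hitR k Y ls then 1 else 0))"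

lemma Lk_Suc: "Lk (Suc k) A = (\<lambda>(s, xs). s # xs) ` (A \<times> Lk k A)"
proof
  show "Lk (Suc k) A \<subseteq> (\<lambda>(s, xs). s # xs) ` (A \<times> Lk k A)"
  proof
    fix l assume "l \<in> Lk (Suc k) A"
    then obtain s xs where l: "l = s # xs" "s \<in> A" "xs \<in> Lk k A"
      unfolding Lk_def by (cases l) auto
    then show "l \<in> (\<lambda>(s, xs). s # xs) ` (A \<times> Lk k A)" by force
  qed
qed (auto simp: Lk_def)

lemma inj_cons: "inj_on (\<lambda>(s, xs). s # xs) X"
  by (auto simp: inj_on_def)

lemma Lk0: "Lk 0 A = {[]}" by (auto simp: Lk_def)

lemma sum_Suc:
  "(\<Sum>l\<in>Lk (Suc k) S. g l) = (\<Sum>s\<in>S. \<Sum>xs\<in>Lk k S. g (s # xs))"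
proof -
  have "(\<Sum>l\<in>Lk (Suc k) S. g l) = (\<Sum>p\<in>S \<times> Lk k S. g ((\<lambda>(s, xs). s # xs) p))"
    unfolding Lk_Suc by (rule sum.reindex[OF inj_cons, unfolded comp_def])
  also have "\<dots> = (\<Sum>s\<in>S. \<Sum>xs\<in>Lk k S. g (s # xs))"
    by (simp add: sum.cartesian_product case_prod_beta')
  finally show ?thesis .
qed

lemma sumL1: "(\<Sum>ls\<in>Lk k S. prod_list (map (pmf \<mu>) ls)) = 1"
proof (induction k)
  case 0 then show ?case by (simp add: Lk0)
next
  case (Suc k)
  have "(\<Sum>ls\<in>Lk (Suc k) S. prod_list (map (pmf \<mu>) ls))
      = (\<Sum>s\<in>S. \<Sum>xs\<in>Lk k S. pmf \<mu> s * prod_list (map (pmf \<mu>) xs))"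
    by (simp only: sum_Suc list.map prod_list.Cons)
  also have "\<dots> = (\<Sum>s\<in>S. pmf \<mu> s * (\<Sum>xs\<in>Lk k S. prod_list (map (pmf \<mu>) xs)))"
    by (simp only: sum_distrib_left)
  also have "\<dots> = 1" by (simp only: Suc.IH mult_1_right sumS)
  finally show ?case .
qed

lemma hitR0: "\<not> hitR 0 Y ls" by (simp add: hitR_def)

lemma hs0: "hs 0 Y = 0" by (simp add: hs_def hitR0)

lemma hitR_Cons:
  "hitR (Suc k) Y (s # xs) \<longleftrightarrow> (\<exists>q\<in>Q. Y [s] = Some q) \<or> hitR k (\<lambda>l. Y (s # l)) xs"
proof
  assume "hitR (Suc k) Y (s # xs)"
  then obtain t q where t: "t \<in> {1..Suc k}" "q \<in> Q" "Y (take t (s # xs)) = Some q"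
    unfolding hitR_def by blast
  then obtain t' where t': "t = Suc t'" by (cases t) auto
  show "(\<exists>q\<in>Q. Y [s] = Some q) \<or> hitR k (\<lambda>l. Y (s # l)) xs"
  proof (cases "t' = 0")
    case True then show ?thesis using t t' by auto
  next
    case False
    then have "t' \<in> {1..k}" using t t' by auto
    then show ?thesis using t t' unfolding hitR_def by auto
  qed
next
  assume "(\<exists>q\<in>Q. Y [s] = Some q) \<or> hitR k (\<lambda>l. Y (s # l)) xs"
  then show "hitR (Suc k) Y (s # xs)"
  proof
    assume "\<exists>q\<in>Q. Y [s] = Some q"
    then have "\<exists>q\<in>Q. Y (take 1 (s # xs)) = Some q" by simp
    moreover have "(1::nat) \<in> {1..Suc k}" by simp
    ultimately show ?thesis unfolding hitR_def by blast
  next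
    assume "hitR k (\<lambda>l. Y (s # l)) xs"
    then obtain t q where t: "t \<in> {1..k}" "q \<in> Q" "Y (s # take t xs) = Some q"
      unfolding hitR_def by blast
    then have "Y (take (Suc t) (s # xs)) = Some q" by simp
    moreover have "Suc t \<in> {1..Suc k}" using t by simp
    ultimately show ?thesis unfolding hitR_def using t by blast
  qed
qed

lemma hs_Suc:
  "hs (Suc k) Y = (\<Sum>s\<in>S. pmf \<mu> s * (if \<exists>q\<in>Q. Y [s] = Some q then 1 else hs k (\<lambda>l. Y (s # l))))"
proof -
  have "hs (Suc k) Y = (\<Sum>s\<in>S. \<Sum>xs\<in>Lk k S. pmf \<mu> s * (prod_list (map (pmf \<mu>) xs) *
           (if (\<exists>q\<in>Q. Y [s] = Some q) \<or> hitR k (\<lambda>l. Y (s # l)) xs then 1 else 0)))"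
    unfolding hs_def sum_Suc hitR_Cons by (simp only: list.map prod_list.Cons mult.assoc)
  also have "\<dots> = (\<Sum>s\<in>S. pmf \<mu> s * (if \<exists>q\<in>Q. Y [s] = Some q then 1 else hs k (\<lambda>l. Y (s # l))))"
  proof (intro sum.cong refl)
    fix s assume "s \<in> S"
    show "(\<Sum>xs\<in>Lk k S. pmf \<mu> s * (prod_list (map (pmf \<mu>) xs) *
           (if (\<exists>q\<in>Q. Y [s] = Some q) \<or> hitR k (\<lambda>l. Y (s # l)) xs then 1 else 0))) =
          pmf \<mu> s * (if \<exists>q\<in>Q. Y [s] = Some q then 1 else hs k (\<lambda>l. Y (s # l)))"
    proof (cases "\<exists>q\<in>Q. Y [s] = Some q")
      case True
      have "(\<Sum>xs\<in>Lk k S. pmf \<mu> s * (prod_list (map (pmf \<mu>) xs) *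
           (if (\<exists>q\<in>Q. Y [s] = Some q) \<or> hitR k (\<lambda>l. Y (s # l)) xs then 1 else 0)))
          = (\<Sum>xs\<in>Lk k S. pmf \<mu> s * prod_list (map (pmf \<mu>) xs))"
        using True by (intro sum.cong refl) simp
      also have "\<dots> = pmf \<mu> s * (\<Sum>xs\<in>Lk k S. prod_list (map (pmf \<mu>) xs))"
        by (rule sum_distrib_left[symmetric])
      also have "\<dots> = pmf \<mu> s" by (simp only: sumL1 mult_1_right)
      finally show ?thesis using True by simp
    next
      case False
      then show ?thesis by (simp add: sum_distrib_left[symmetric] hs_def)
    qed
  qed
  finally show ?thesis .
qed

lemma hs_lower:
  "x \<in> {1..n} \<Longrightarrow> Y [] = Some x \<Longrightarrow>
   (\<forall>ls s i. set ls \<subseteq> S \<longrightarrow> s \<in> S \<longrightarrow> Y ls = Some i \<longrightarrow> i \<in> {1..n} \<longrightarrow>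
      (\<exists>j. Y (ls @ [s]) = Some j \<and> j \<in> outnb E i s)) \<Longrightarrow>
   - vs k x \<le> hs k Y"
proof (induction k arbitrary: x Y)
  case 0 then show ?case by (simp add: hs0)
next
  case (Suc k)
  note P = Suc.prems(3)
  have ex: "\<exists>j. Y [s] = Some j \<and> j \<in> outnb E x s" if "s \<in> S" for s
    using P[rule_format, of "[]" s x] that Suc.prems(1,2) by simp
  define b where "b = restrict (\<lambda>s. the (Y [s])) S"
  have bY: "Y [s] = Some (b s) \<and> b s \<in> outnb E x s" if "s \<in> S" for s
    using ex[OF that] that by (auto simp: b_def)
  have bPi: "b \<in> PiE S (outnb E x)" using bY by (auto simp: b_def)
  have trm: "pmf \<mu> s * cc k (b s) \<le>
      pmf \<mu> s * (if \<exists>q\<in>Q. Y [s] = Some q then 1 else hs k (\<lambda>l. Y (s # l)))" if s: "s \<in> S" for s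
  proof (rule mult_left_mono)
    show "0 \<le> pmf \<mu> s" by simp
    have bs: "b s \<in> {1..n}" using bY[OF s] outnb_sub[of s x] s by auto
    show "cc k (b s) \<le> (if \<exists>q\<in>Q. Y [s] = Some q then 1 else hs k (\<lambda>l. Y (s # l)))"
    proof (cases "b s \<in> Q")
      case True then show ?thesis using bY[OF s] by (simp add: cc_def)
    next
      case False
      have "- vs k (b s) \<le> hs k (\<lambda>l. Y (s # l))"
      proof (rule Suc.IH[OF bs])
        show "Y [s] = Some (b s)" using bY[OF s] by simp
        show "\<forall>ls s' i. set ls \<subseteq> S \<longrightarrow> s' \<in> S \<longrightarrow> Y (s # ls) = Some i \<longrightarrow> i \<in> {1..n} \<longrightarrow>
            (\<exists>j. Y (s # ls @ [s']) = Some j \<and> j \<in> outnb E i s')"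
        proof (intro allI impI)
          fix ls s' i assume "set ls \<subseteq> S" "s' \<in> S" "Y (s # ls) = Some i" "i \<in> {1..n}"
          then show "\<exists>j. Y (s # ls @ [s']) = Some j \<and> j \<in> outnb E i s'"
            using P[rule_format, of "s # ls" s' i] s by simp
        qed
      qed
      then show ?thesis using False bY[OF s] by (simp add: cc_def)
    qed
  qed
  have "- vs (Suc k) x \<le> (\<Sum>s\<in>S. pmf \<mu> s * cc k (b s))" by (rule V1[OF Suc.prems(1) bPi])
  also have "\<dots> \<le> (\<Sum>s\<in>S. pmf \<mu> s * (if \<exists>q\<in>Q. Y [s] = Some q then 1 else hs k (\<lambda>l. Y (s # l))))"
    by (rule sum_mono) (rule trm)
  also have "\<dots> = hs (Suc k) Y" by (rule hs_Suc[symmetric])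
  finally show ?case .
qed

definition opt :: "nat \<Rightarrow> nat \<Rightarrow> nat \<Rightarrow> nat" where
  "opt k x = (SOME b. b \<in> PiE S (outnb E x) \<and> (\<Sum>s\<in>S. pmf \<mu> s * cc k (b s)) = - vs (Suc k) x)"

lemma opt: "x \<in> {1..n} \<Longrightarrow> opt k x \<in> PiE S (outnb E x) \<and> (\<Sum>s\<in>S. pmf \<mu> s * cc k (opt k x s)) = - vs (Suc k) x"
proof -
  assume x: "x \<in> {1..n}"
  from V2[OF x, of k] obtain b where b: "b \<in> PiE S (outnb E x)" "(\<Sum>s\<in>S. pmf \<mu> s * cc k (b s)) = - vs (Suc k) x"
    by blast
  show ?thesis unfolding opt_def
    by (rule someI[of "\<lambda>b. b \<in> PiE S (outnb E x) \<and> (\<Sum>s\<in>S. pmf \<mu> s * cc k (b s)) = - vs (Suc k) x" b])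
       (rule conjI[OF b])
qed

lemma hs_upper:
  "x \<in> {1..n} \<Longrightarrow> Y [] = Some x \<Longrightarrow>
   (\<forall>ls s i. set ls \<subseteq> S \<longrightarrow> length ls < k \<longrightarrow> s \<in> S \<longrightarrow> Y ls = Some i \<longrightarrow> i \<in> {1..n} \<longrightarrow>
      Y (ls @ [s]) = Some (opt (k - 1 - length ls) i s)) \<Longrightarrow>
   hs k Y \<le> - vs k x"
proof (induction k arbitrary: x Y)
  case 0 then show ?case by (simp add: hs0)
next
  case (Suc k)
  note P = Suc.prems(3)
  define b where "b = opt k x"
  have bPi: "b \<in> PiE S (outnb E x)" and bsum: "(\<Sum>s\<in>S. pmf \<mu> s * cc k (b s)) = - vs (Suc k) x"
    using opt[OF Suc.prems(1)] by (auto simp: b_def)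
  have bY: "Y [s] = Some (b s)" if "s \<in> S" for s
    using P[rule_format, of "[]" s x] that Suc.prems(1,2) by (simp add: b_def)
  have trm: "pmf \<mu> s * (if \<exists>q\<in>Q. Y [s] = Some q then 1 else hs k (\<lambda>l. Y (s # l))) \<le>
      pmf \<mu> s * cc k (b s)" if s: "s \<in> S" for s
  proof (rule mult_left_mono)
    show "0 \<le> pmf \<mu> s" by simp
    have bs: "b s \<in> {1..n}" using PiE_mem[OF bPi s] outnb_sub[of s x] s by auto
    show "(if \<exists>q\<in>Q. Y [s] = Some q then 1 else hs k (\<lambda>l. Y (s # l))) \<le> cc k (b s)"
    proof (cases "b s \<in> Q")
      case True then show ?thesis using bY[OF s] by (simp add: cc_def)
    next
      case False
      have "hs k (\<lambda>l. Y (s # l)) \<le> - vs k (b s)"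
      proof (rule Suc.IH[OF bs])
        show "Y [s] = Some (b s)" using bY[OF s] by simp
        show "\<forall>ls s' i. set ls \<subseteq> S \<longrightarrow> length ls < k \<longrightarrow> s' \<in> S \<longrightarrow> Y (s # ls) = Some i \<longrightarrow> i \<in> {1..n} \<longrightarrow>
            Y (s # ls @ [s']) = Some (opt (k - 1 - length ls) i s')"
        proof (intro allI impI)
          fix ls s' i assume "set ls \<subseteq> S" "length ls < k" "s' \<in> S" "Y (s # ls) = Some i" "i \<in> {1..n}"
          then show "Y (s # ls @ [s']) = Some (opt (k - 1 - length ls) i s')"
            using P[rule_format, of "s # ls" s' i] s by simp
        qed
      qed
      then show ?thesis using False bY[OF s] by (simp add: cc_def)
    qed
  qed
  have "hs (Suc k) Y = (\<Sum>s\<in>S. pmf \<mu> s * (if \<exists>q\<in>Q. Y [s] = Some q then 1 else hs k (\<lambda>l. Y (s # l))))"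
    by (rule hs_Suc)
  also have "\<dots> \<le> (\<Sum>s\<in>S. pmf \<mu> s * cc k (b s))"
    by (rule sum_mono) (rule trm)
  also have "\<dots> = - vs (Suc k) x" by (rule bsum)
  finally show ?case .
qed

end

context rsetup
begin

definition Yof :: "(nat \<Rightarrow> 'a \<Rightarrow> nat option) \<Rightarrow> nat list \<Rightarrow> nat option" where
  "Yof y ls = y (length ls) (SOME \<omega>. \<omega> \<in> space M \<and> pre w (length ls) \<omega> = ls)"

lemma Yof_pre:
  assumes y: "stoch_path M w E x y" and om: "\<omega> \<in> space M"
  shows "Yof y (pre w t \<omega>) = y t \<omega>"
proof -
  define \<omega>' where "\<omega>' = (SOME \<omega>'. \<omega>' \<in> space M \<and> pre w t \<omega>' = pre w t \<omega>)"
  have o': "\<omega>' \<in> space M \<and> pre w t \<omega>' = pre w t \<omega>"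
    unfolding \<omega>'_def by (rule someI[of _ \<omega>]) (simp add: om)
  have Y: "Yof y (pre w t \<omega>) = y t \<omega>'" by (simp add: Yof_def \<omega>'_def)
  show ?thesis
  proof (cases t)
    case 0 then show ?thesis using Y y o' om by (simp add: stoch_path_def)
  next
    case (Suc t')
    have m: "y (Suc t') \<in> measurable (past_sigma M w t') (count_space UNIV)"
      using y by (simp add: stoch_path_def)
    have "y (Suc t') \<omega>' = y (Suc t') \<omega>"
      by (rule atom_const[OF m]) (use o' om Suc in auto)
    then show ?thesis using Y Suc by simp
  qed
qed

lemma event_eq:
  assumes y: "stoch_path M w E x y"
  shows "{\<omega>\<in>space M. \<exists>t\<in>{1..k}. \<exists>q\<in>Q. y t \<omega> = Some q} = {\<omega>\<in>space M. hitR k (Yof y) (pre w k \<omega>)}"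
proof -
  have "(\<exists>t\<in>{1..k}. \<exists>q\<in>Q. y t \<omega> = Some q) \<longleftrightarrow> hitR k (Yof y) (pre w k \<omega>)" if om: "\<omega> \<in> space M" for \<omega>
    unfolding hitR_def
  proof (rule bex_cong[OF refl])
    fix t assume "t \<in> {1..k}"
    then have "Yof y (take t (pre w k \<omega>)) = y t \<omega>" using Yof_pre[OF y om] take_pre[of t k w \<omega>] by simp
    then show "(\<exists>q\<in>Q. y t \<omega> = Some q) \<longleftrightarrow> (\<exists>q\<in>Q. Yof y (take t (pre w k \<omega>)) = Some q)" by simp
  qed
  then show ?thesis by blast
qed

lemma prob_path:
  assumes y: "stoch_path M w E x y"
  shows "prob {\<omega>\<in>space M. \<exists>t\<in>{1..k}. \<exists>q\<in>Q. y t \<omega> = Some q} = hs k (Yof y)"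
  unfolding event_eq[OF y] event_prob hs_def ..

lemma Yof_nil:
  assumes y: "stoch_path M w E x y"
  shows "Yof y [] = Some x"
proof -
  obtain \<omega> where om: "\<omega> \<in> space M" using not_empty by blast
  have "Yof y (pre w 0 \<omega>) = y 0 \<omega>" by (rule Yof_pre[OF y om])
  then show ?thesis using y om by (simp add: stoch_path_def pre_def)
qed

lemma atom_snoc:
  assumes "set ls \<subseteq> S" "s \<in> S"
  obtains \<omega> where "\<omega> \<in> space M" "pre w (length ls) \<omega> = ls" "w (length ls) \<omega> = s"
proof -
  have "set (ls @ [s]) \<subseteq> S" using assms by simp
  from atom_ne[OF this] obtain \<omega> where om: "\<omega> \<in> space M" "pre w (length (ls @ [s])) \<omega> = ls @ [s]" by blast
  then have "pre w (length ls) \<omega> @ [w (length ls) \<omega>] = ls @ [s]" by (simp add: pre_Suc)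
  then show ?thesis using that om(1) by simp
qed

lemma maxpath_prop:
  assumes y: "y \<in> max_stoch_paths M w E x"
  shows "\<forall>ls s i. set ls \<subseteq> S \<longrightarrow> s \<in> S \<longrightarrow> Yof y ls = Some i \<longrightarrow> i \<in> {1..n} \<longrightarrow>
      (\<exists>j. Yof y (ls @ [s]) = Some j \<and> j \<in> outnb E i s)"
proof (intro allI impI)
  fix ls s i assume ls: "set ls \<subseteq> S" and s: "s \<in> S" and Yi: "Yof y ls = Some i" and i: "i \<in> {1..n}"
  have sp: "stoch_path M w E x y" using y by (simp add: max_stoch_paths_def)
  obtain \<omega> where om: "\<omega> \<in> space M" "pre w (length ls) \<omega> = ls" "w (length ls) \<omega> = s"
    using atom_snoc[OF ls s] by blast
  let ?t = "length ls"
  have yt: "y ?t \<omega> = Some i" using Yof_pre[OF sp om(1), of ?t] om Yi by simp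
  have y1: "Yof y (ls @ [s]) = y (Suc ?t) \<omega>"
    using Yof_pre[OF sp om(1), of "Suc ?t"] om by (simp add: pre_Suc)
  show "\<exists>j. Yof y (ls @ [s]) = Some j \<and> j \<in> outnb E i s"
  proof (cases "y (Suc ?t) \<omega>")
    case None
    then have "outnb E i (w ?t \<omega>) = {}" using y yt om(1) by (auto simp: max_stoch_paths_def)
    then show ?thesis using outnb_ne[OF i s] om(3) by simp
  next
    case (Some j)
    then have "j \<in> outnb E i (w ?t \<omega>)" using sp yt om(1) unfolding stoch_path_def by blast
    then show ?thesis using Some y1 om(3) by simp
  qed
qed

definition nxt :: "nat \<Rightarrow> nat \<Rightarrow> nat \<Rightarrow> nat \<Rightarrow> nat option" where
  "nxt k t i s = (if t < k \<and> s \<in> S \<and> i \<in> {1..n} then Some (opt (k - 1 - t) i s)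
     else if outnb E i s = {} then None else Some (SOME j. j \<in> outnb E i s))"

primrec ypath :: "nat \<Rightarrow> nat \<Rightarrow> nat \<Rightarrow> 'a \<Rightarrow> nat option" where
  "ypath k x 0 \<omega> = Some x"
| "ypath k x (Suc t) \<omega> = (case ypath k x t \<omega> of None \<Rightarrow> None | Some i \<Rightarrow> nxt k t i (w t \<omega>))"

lemma w_past: "t \<le> t' \<Longrightarrow> w t \<in> measurable (past_sigma M w t') (count_space UNIV)"
proof (rule measurableI)
  fix A :: "nat set" assume "t \<le> t'"
  then have "w t -` A \<inter> space M \<in> sigma_sets (space M) {w i -` A \<inter> space M | i A. i \<le> t'}"
    by (intro sigma_sets.Basic) blast
  then show "w t -` A \<inter> space (past_sigma M w t') \<in> sets (past_sigma M w t')"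
    by (simp add: space_past sets_past)
qed simp

lemma ypath_meas: "t \<le> Suc t' \<Longrightarrow> ypath k x t \<in> measurable (past_sigma M w t') (count_space UNIV)"
proof (induction t)
  case 0 then show ?case by simp
next
  case (Suc t)
  then have t: "t \<le> t'" by simp
  have eq: "ypath k x (Suc t) = (\<lambda>\<omega>. (\<lambda>z \<omega>. case_option None (\<lambda>i. nxt k t i (w t \<omega>)) z) (ypath k x t \<omega>) \<omega>)"
    by (rule ext) simp
  show ?case unfolding eq
  proof (rule measurable_compose_countable'[where I = UNIV and g = "ypath k x t" and
      f = "\<lambda>z \<omega>. case_option None (\<lambda>i. nxt k t i (w t \<omega>)) z"])
    fix z :: "nat option" assume "z \<in> UNIV"
    show "(\<lambda>\<omega>. case_option None (\<lambda>i. nxt k t i (w t \<omega>)) z) \<in> measurable (past_sigma M w t') (count_space UNIV)"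
    proof (cases z)
      case None then show ?thesis by simp
    next
      case (Some i)
      then show ?thesis by (simp add: measurable_compose[OF w_past[OF t]])
    qed
  next
    show "ypath k x t \<in> measurable (past_sigma M w t') (count_space UNIV)" using Suc t by simp
  qed simp
qed

lemma ypath_max:
  assumes x: "x \<in> {1..n}"
  shows "ypath k x \<in> max_stoch_paths M w E x"
proof -
  have tr: "j \<in> outnb E i s" if "nxt k t i s = Some j" for t i s j
  proof (cases "t < k \<and> s \<in> S \<and> i \<in> {1..n}")
    case True
    then have "opt (k - 1 - t) i \<in> PiE S (outnb E i)" using opt by blast
    then show ?thesis using that True PiE_mem by (fastforce simp: nxt_def)
  next
    case False
    then have ne: "outnb E i s \<noteq> {}" and j: "j = (SOME j. j \<in> outnb E i s)"
      using that by (auto simp: nxt_def split: if_splits)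
    then show ?thesis by (simp add: some_in_eq)
  qed
  have nn: "outnb E i s = {}" if "nxt k t i s = None" for t i s
    using that by (auto simp: nxt_def split: if_splits)
  show ?thesis
    unfolding max_stoch_paths_def stoch_path_def
    using tr nn ypath_meas[of "Suc _" _ k x]
    by (auto split: option.splits)
qed

lemma ypath_pol:
  assumes x: "x \<in> {1..n}"
  shows "\<forall>ls s i. set ls \<subseteq> S \<longrightarrow> length ls < k \<longrightarrow> s \<in> S \<longrightarrow> Yof (ypath k x) ls = Some i \<longrightarrow> i \<in> {1..n} \<longrightarrow>
      Yof (ypath k x) (ls @ [s]) = Some (opt (k - 1 - length ls) i s)"
proof (intro allI impI)
  fix ls s i assume ls: "set ls \<subseteq> S" and lk: "length ls < k" and s: "s \<in> S"
    and Yi: "Yof (ypath k x) ls = Some i" and i: "i \<in> {1..n}"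
  have sp: "stoch_path M w E x (ypath k x)" using ypath_max[OF x] by (simp add: max_stoch_paths_def)
  obtain \<omega> where om: "\<omega> \<in> space M" "pre w (length ls) \<omega> = ls" "w (length ls) \<omega> = s"
    using atom_snoc[OF ls s] by blast
  let ?t = "length ls"
  have yt: "ypath k x ?t \<omega> = Some i" using Yof_pre[OF sp om(1), of ?t] om Yi by simp
  have y1: "Yof (ypath k x) (ls @ [s]) = ypath k x (Suc ?t) \<omega>"
    using Yof_pre[OF sp om(1), of "Suc ?t"] om by (simp add: pre_Suc)
  show "Yof (ypath k x) (ls @ [s]) = Some (opt (k - 1 - length ls) i s)"
    using y1 yt om(3) lk s i by (simp add: nxt_def)
qed

theorem main:
  assumes x: "x \<in> {1..n}"
  shows "strong_rec_prob M w E Q k x = - vs k x"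
proof -
  let ?MS = "max_stoch_paths M w E x"
  let ?f = "\<lambda>y. prob {\<omega>\<in>space M. \<exists>t\<in>{1..k}. \<exists>q\<in>Q. y t \<omega> = Some q}"
  have low: "- vs k x \<le> ?f y" if y: "y \<in> ?MS" for y
  proof -
    have sp: "stoch_path M w E x y" using y by (simp add: max_stoch_paths_def)
    show ?thesis unfolding prob_path[OF sp]
      by (rule hs_lower[OF x Yof_nil[OF sp] maxpath_prop[OF y]])
  qed
  have yin: "ypath k x \<in> ?MS" by (rule ypath_max[OF x])
  have up: "?f (ypath k x) \<le> - vs k x"
  proof -
    have sp: "stoch_path M w E x (ypath k x)" using yin by (simp add: max_stoch_paths_def)
    show ?thesis unfolding prob_path[OF sp]
      by (rule hs_upper[OF x Yof_nil[OF sp] ypath_pol[OF x]])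
  qed
  have "(INF y\<in>?MS. ?f y) = - vs k x"
  proof (rule antisym)
    have "(INF y\<in>?MS. ?f y) \<le> ?f (ypath k x)"
      by (rule cINF_lower[OF bdd_belowI2[OF low] yin])
    then show "(INF y\<in>?MS. ?f y) \<le> - vs k x" using up by linarith
    show "- vs k x \<le> (INF y\<in>?MS. ?f y)"
      by (rule cINF_greatest) (use yin low in auto)
  qed
  then show ?thesis unfolding strong_rec_prob_def .
qed

end

theorem proposition2:
  fixes n h :: nat and E :: "nat \<Rightarrow> (nat \<times> nat) set" and \<mu> :: "nat pmf"
    and Q :: "nat set" and M :: "'a measure" and w :: "nat \<Rightarrow> 'a \<Rightarrow> nat"
  assumes "\<forall>s\<in>{1..h}. E s \<subseteq> {1..n} \<times> {1..n}"
    and "set_pmf \<mu> \<subseteq> {1..h}"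
    and "\<not> (\<exists>i\<in>{1..n}. \<exists>s\<in>{1..h}. pmf \<mu> s > 0 \<and> outnb E i s = {})"
    and "Q \<subseteq> {1..n}"
    and "prob_space M"
    and "\<forall>k. \<forall>\<omega>\<in>space M. w k \<omega> \<in> {1..h}"
    and "prob_space.indep_vars M (\<lambda>_. count_space UNIV) w UNIV"
    and "\<forall>k. distr M (count_space UNIV) (w k) = measure_pmf \<mu>"
  shows "\<forall>k. \<forall>x\<in>{1..n}. strong_rec_prob M w E Q k x = - vstar n h E \<mu> Q k x"
proof -
  have "rsetup M n h E \<mu> Q w"
    unfolding rsetup_def rsetup_axioms_def using assms by blast
  then interpret r: rsetup M n h E \<mu> Q w .
  show ?thesis using r.main by blast
qed

end
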